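(* Let $u,v,w$ be words of length $N$. For an oriented TFPL $f$ with boundary $(u,v;w)$, let $M_o(f)$ be the set of edges of $f$ oriented from an odd vertex to an even vertex, and $M_e(f)$ the set of edges of $f$ oriented from an even vertex to an odd vertex. Then $f\mapsto (M_o(f),M_e(f))$ is a bijection between the set of oriented TFPLs with boundary $(u,v;w)$ and the set of ordered pairs $(M_o,M_e)$ where $M_o$ is a perfect matching of $G^N_o(u,w)$, $M_e$ is a perfect matching of $G^N_e(v,w)$, and $M_o$ and $M_e$ are disjoint as sets of edges of $G^N$.
   Context: Let $N\ge 1$. $G^N$ is the induced subgraph of the square lattice $\mathbb{Z}^2$ formed by $N$ consecutive, horizontally centred rows having $3,5,\dots,2N+1$ vertices from top to bottom. It is bipartite; vertices of the same colour as the leftmost vertex of each row are called odd, the others even. Let $B_1,\dots,B_N$ be the even vertices of the bottom row, $L_1,\dots,L_N$ the leftmost vertices of the rows, and $R_1,\dots,R_N$ the rightmost vertices of the rows, each family numbered from left to right (so $L_1$ is the leftmost vertex of the bottom row and $R_1$ the rightmost vertex of the top row). A TFPL of size $N$ is a subgraph $f$ of $G^N$ (a set of edges) such that each $L_i$ and each $R_i$ has degree $0$ or $1$, each $B_i$ has degree $1$, every other vertex has degree $2$, and no path of $f$ joins two vertices $L_i,L_j$ or two vertices $R_i,R_j$. An oriented TFPL is a TFPL together with an orientation of each of its edges such that every vertex of degree $2$ has one incoming and one outgoing edge, the edges at the $L_i$ are oriented away from $L_i$, and the edges at the $R_i$ are oriented into $R_i$. For words $u,v,w\in\{0,1\}^N$,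 an oriented TFPL has boundary $(u,v;w)$ if for all $i$: $u_i=1$ iff $L_i$ has degree $1$; $v_i=0$ iff $R_i$ has degree $1$; $w_i=1$ if $B_i$ has in-degree $1$ and $w_i=0$ if $B_i$ has out-degree $1$. $G^N_o(u,w)$ is the induced subgraph of $G^N$ obtained by deleting all $R_i$, all $B_i$ with $w_i=0$, and all $L_i$ with $u_i=0$. $G^N_e(v,w)$ is the induced subgraph of $G^N$ obtained by deleting all $L_i$, all $B_i$ with $w_i=1$, and all $R_i$ with $v_i=1$. *)

theory Defs
  imports Main
begin

(* Coordinates: vertex (x,y) :: int * int, row y = 1..N counted from the top,
   row y consists of the vertices x = -y..y (2y+1 vertices, horizontally centred). *)

type_synonym vert = "int \<times> int"
type_synonym edge = "vert set"

definition GV :: "nat \<Rightarrow> vert set" where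
  "GV N = {(x, y). 1 \<le> y \<and> y \<le> int N \<and> \<bar>x\<bar> \<le> y}"

definition lattice_adj :: "vert \<Rightarrow> vert \<Rightarrow> bool" where
  "lattice_adj p q \<longleftrightarrow> \<bar>fst p - fst q\<bar> + \<bar>snd p - snd q\<bar> = 1"

definition GE :: "nat \<Rightarrow> edge set" where
  "GE N = {{p, q} | p q. p \<in> GV N \<and> q \<in> GV N \<and> lattice_adj p q}"

(* "odd" vertices: same colour as the leftmost vertex (-y,y) of each row *)
definition odd_vertex :: "vert \<Rightarrow> bool" where
  "odd_vertex p \<longleftrightarrow> even (fst p + snd p)"

definition even_vertex :: "vert \<Rightarrow> bool" where
  "even_vertex p \<longleftrightarrow> odd (fst p + snd p)"

(* L_i: leftmost vertices, numbered left to right (L_1 leftmost of bottom row) *)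
definition Lv :: "nat \<Rightarrow> nat \<Rightarrow> vert" where
  "Lv N i = (- int (N + 1 - i), int (N + 1 - i))"

(* R_i: rightmost vertices, numbered left to right (R_1 rightmost of top row) *)
definition Rv :: "nat \<Rightarrow> vert" where
  "Rv i = (int i, int i)"

(* B_i: even vertices of the bottom row, numbered left to right *)
definition Bv :: "nat \<Rightarrow> nat \<Rightarrow> vert" where
  "Bv N i = (2 * int i - 1 - int N, int N)"

(* letter i (1-based) of a word *)
definition letter :: "nat list \<Rightarrow> nat \<Rightarrow> nat" where
  "letter u i = u ! (i - 1)"

definition is_word :: "nat \<Rightarrow> nat list \<Rightarrow> bool" where
  "is_word N u \<longleftrightarrow> length u = N \<and> set u \<subseteq> {0, 1}"

definition deg :: "edge set \<Rightarrow> vert \<Rightarrow> nat" where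
  "deg f p = card {e \<in> f. p \<in> e}"

definition joined :: "edge set \<Rightarrow> vert \<Rightarrow> vert \<Rightarrow> bool" where
  "joined f p q \<longleftrightarrow> (p, q) \<in> {(a, b). {a, b} \<in> f}\<^sup>*"

definition is_TFPL :: "nat \<Rightarrow> edge set \<Rightarrow> bool" where
  "is_TFPL N f \<longleftrightarrow>
     f \<subseteq> GE N \<and>
     (\<forall>i\<in>{1..N}. deg f (Lv N i) \<le> 1 \<and> deg f (Rv i) \<le> 1 \<and> deg f (Bv N i) = 1) \<and>
     (\<forall>p\<in>GV N. p \<notin> Lv N ` {1..N} \<union> Rv ` {1..N} \<union> Bv N ` {1..N} \<longrightarrow> deg f p = 2) \<and>
     (\<forall>i\<in>{1..N}. \<forall>j\<in>{1..N}. i \<noteq> j \<longrightarrow>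
        \<not> joined f (Lv N i) (Lv N j) \<and> \<not> joined f (Rv i) (Rv j))"

(* An oriented TFPL is represented by its set D of oriented edges (arcs);
   the underlying TFPL is the set of unoriented edges of D. *)
definition und :: "(vert \<times> vert) set \<Rightarrow> edge set" where
  "und D = {{a, b} | a b. (a, b) \<in> D}"

definition indeg :: "(vert \<times> vert) set \<Rightarrow> vert \<Rightarrow> nat" where
  "indeg D p = card {q. (q, p) \<in> D}"

definition outdeg :: "(vert \<times> vert) set \<Rightarrow> vert \<Rightarrow> nat" where
  "outdeg D p = card {q. (p, q) \<in> D}"

definition is_oriented_TFPL :: "nat \<Rightarrow> (vert \<times> vert) set \<Rightarrow> bool" where
  "is_oriented_TFPL N D \<longleftrightarrow>
     (\<forall>a b. (a, b) \<in> D \<longrightarrow> {a, b} \<in> GE N \<and> (b, a) \<notin> D) \<and>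
     is_TFPL N (und D) \<and>
     (\<forall>p\<in>GV N. deg (und D) p = 2 \<longrightarrow> indeg D p = 1 \<and> outdeg D p = 1) \<and>
     (\<forall>i\<in>{1..N}. indeg D (Lv N i) = 0 \<and> outdeg D (Rv i) = 0)"

definition has_boundary ::
    "nat \<Rightarrow> nat list \<Rightarrow> nat list \<Rightarrow> nat list \<Rightarrow> (vert \<times> vert) set \<Rightarrow> bool" where
  "has_boundary N u v w D \<longleftrightarrow>
     (\<forall>i\<in>{1..N}.
        (letter u i = 1 \<longleftrightarrow> deg (und D) (Lv N i) = 1) \<and>
        (letter v i = 0 \<longleftrightarrow> deg (und D) (Rv i) = 1) \<and>
        (letter w i = 1 \<longrightarrow> indeg D (Bv N i) = 1) \<and>
        (letter w i = 0 \<longrightarrow> outdeg D (Bv N i) = 1))"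

definition induced_edges :: "nat \<Rightarrow> vert set \<Rightarrow> edge set" where
  "induced_edges N W = {e \<in> GE N. e \<subseteq> W}"

definition perfect_matching :: "nat \<Rightarrow> vert set \<Rightarrow> edge set \<Rightarrow> bool" where
  "perfect_matching N W M \<longleftrightarrow>
     M \<subseteq> induced_edges N W \<and> (\<forall>p\<in>W. \<exists>!e. e \<in> M \<and> p \<in> e)"

definition GoV :: "nat \<Rightarrow> nat list \<Rightarrow> nat list \<Rightarrow> vert set" where
  "GoV N u w = GV N - Rv ` {1..N} - Bv N ` {i \<in> {1..N}. letter w i = 0}
                    - (\<lambda>i. Lv N i) ` {i \<in> {1..N}. letter u i = 0}"

definition GeV :: "nat \<Rightarrow> nat list \<Rightarrow> nat list \<Rightarrow> vert set" where
  "GeV N v w = GV N - (\<lambda>i. Lv N i) ` {1..N} - Bv N ` {i \<in> {1..N}. letter w i = 1}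
                    - Rv ` {i \<in> {1..N}. letter v i = 1}"

definition Mo :: "(vert \<times> vert) set \<Rightarrow> edge set" where
  "Mo D = {{a, b} | a b. (a, b) \<in> D \<and> odd_vertex a \<and> even_vertex b}"

definition Me :: "(vert \<times> vert) set \<Rightarrow> edge set" where
  "Me D = {{a, b} | a b. (a, b) \<in> D \<and> even_vertex a \<and> odd_vertex b}"

end

theory Submission
  imports Defs
begin


lemma even_not_odd_vertex: "even_vertex p \<longleftrightarrow> \<not> odd_vertex p"
  by (simp add: odd_vertex_def even_vertex_def)

lemma adj_parity:
  assumes "lattice_adj p q" shows "odd_vertex p \<longleftrightarrow> even_vertex q"
proof -
  obtain a b c d where pq: "p = (a,b)" "q = (c,d)" by (cases p, cases q) auto
  have h: "\<bar>a - c\<bar> + \<bar>b - d\<bar> = 1" using assms pq by (simp add: lattice_adj_def)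
  hence "(a - c = 0 \<and> (b - d = 1 \<or> b - d = -1)) \<or> (b - d = 0 \<and> (a - c = 1 \<or> a - c = -1))"
    by arith
  hence "even (a + b) \<longleftrightarrow> odd (c + d)" by presburger
  thus ?thesis using pq by (simp add: odd_vertex_def even_vertex_def)
qed

lemma adj_sym: "lattice_adj p q \<longleftrightarrow> lattice_adj q p"
  by (simp add: lattice_adj_def abs_minus_commute)

lemma adj_neq: "lattice_adj p q \<Longrightarrow> p \<noteq> q"
  by (auto simp: lattice_adj_def)

lemma GE_pair:
  assumes "{a,b} \<in> GE N"
  shows "a \<in> GV N \<and> b \<in> GV N \<and> lattice_adj a b"
proof -
  from assms obtain p q where "{a,b} = {p,q}" "p \<in> GV N" "q \<in> GV N" "lattice_adj p q"
    by (auto simp: GE_def)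
  thus ?thesis by (auto simp: doubleton_eq_iff adj_sym)
qed

lemma GE_parity: "{a,b} \<in> GE N \<Longrightarrow> odd_vertex a \<longleftrightarrow> even_vertex b"
  using GE_pair adj_parity by blast

lemma GE_elim: "e \<in> GE N \<Longrightarrow> \<exists>a b. e = {a,b}"
  by (auto simp: GE_def)

lemma finite_GV: "finite (GV N)"
proof -
  have "GV N \<subseteq> {-int N..int N} \<times> {1..int N}" by (auto simp: GV_def)
  thus ?thesis by (rule finite_subset) simp
qed

lemma Lv_GV: "i \<in> {1..N} \<Longrightarrow> Lv N i \<in> GV N" by (auto simp: Lv_def GV_def)
lemma Rv_GV: "i \<in> {1..N} \<Longrightarrow> Rv i \<in> GV N" by (auto simp: Rv_def GV_def)
lemma Bv_GV: "i \<in> {1..N} \<Longrightarrow> Bv N i \<in> GV N" by (auto simp: Bv_def GV_def)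
lemma Lv_odd: "odd_vertex (Lv N i)" by (simp add: Lv_def odd_vertex_def)
lemma Rv_odd: "odd_vertex (Rv i)" by (simp add: Rv_def odd_vertex_def)
lemma Bv_even: "even_vertex (Bv N i)" by (simp add: Bv_def even_vertex_def)
lemma Lv_inj: "i \<in> {1..N} \<Longrightarrow> j \<in> {1..N} \<Longrightarrow> Lv N i = Lv N j \<longleftrightarrow> i = j" by (auto simp: Lv_def)
lemma Rv_inj: "Rv i = Rv j \<longleftrightarrow> i = j" by (simp add: Rv_def)
lemma Bv_inj: "Bv N i = Bv N j \<longleftrightarrow> i = j" by (simp add: Bv_def)
lemma Lv_Rv: "i \<in> {1..N} \<Longrightarrow> j \<in> {1..N} \<Longrightarrow> Lv N i \<noteq> Rv j" by (auto simp: Lv_def Rv_def)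
lemma Lv_Bv: "Lv N i \<noteq> Bv N j" using Lv_odd Bv_even even_not_odd_vertex by metis
lemma Rv_Bv: "Rv i \<noteq> Bv N j" using Rv_odd Bv_even even_not_odd_vertex by metis

lemma letter01: assumes "is_word N u" "i \<in> {1..N}" shows "letter u i = 0 \<or> letter u i = 1"
proof -
  have "u ! (i-1) \<in> set u" using assms by (auto simp: is_word_def)
  thus ?thesis using assms by (auto simp: is_word_def letter_def)
qed

lemma GoV_Lv: assumes "i \<in> {1..N}" shows "Lv N i \<in> GoV N u w \<longleftrightarrow> letter u i \<noteq> 0"
proof -
  have a: "Lv N i \<notin> Rv ` {1..N}" using Lv_Rv[OF assms] by blast
  have b: "Lv N i \<notin> Bv N ` X" for X using Lv_Bv by blast
  have c: "Lv N i \<in> Lv N ` {j \<in> {1..N}. letter u j = 0} \<longleftrightarrow> letter u i = 0"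
    using Lv_inj[OF assms] assms by auto
  show ?thesis using a b c Lv_GV[OF assms] by (auto simp: GoV_def)
qed
lemma GeV_Lv: "i \<in> {1..N} \<Longrightarrow> Lv N i \<notin> GeV N v w"
  by (auto simp: GeV_def)
lemma GoV_Rv: "i \<in> {1..N} \<Longrightarrow> Rv i \<notin> GoV N u w"
  by (auto simp: GoV_def)
lemma GeV_Rv: assumes "i \<in> {1..N}" shows "Rv i \<in> GeV N v w \<longleftrightarrow> letter v i \<noteq> 1"
proof -
  have a: "Rv i \<notin> Lv N ` {1..N}" by (metis Lv_Rv[OF _ assms] imageE)
  have b: "Rv i \<notin> Bv N ` X" for X using Rv_Bv by blast
  have c: "Rv i \<in> Rv ` {j \<in> {1..N}. letter v j = 1} \<longleftrightarrow> letter v i = 1"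
    using Rv_inj assms by auto
  show ?thesis using a b c Rv_GV[OF assms] by (auto simp: GeV_def)
qed
lemma GoV_Bv: assumes "i \<in> {1..N}" shows "Bv N i \<in> GoV N u w \<longleftrightarrow> letter w i \<noteq> 0"
proof -
  have a: "Bv N i \<notin> Lv N ` X" for X by (metis Lv_Bv imageE)
  have b: "Bv N i \<notin> Rv ` X" for X by (metis Rv_Bv imageE)
  have c: "Bv N i \<in> Bv N ` {j \<in> {1..N}. letter w j = 0} \<longleftrightarrow> letter w i = 0"
    using Bv_inj assms by auto
  show ?thesis using a b c Bv_GV[OF assms] by (auto simp: GoV_def)
qed
lemma GeV_Bv: assumes "i \<in> {1..N}" shows "Bv N i \<in> GeV N v w \<longleftrightarrow> letter w i \<noteq> 1"
proof -
  have a: "Bv N i \<notin> Lv N ` X" for X by (metis Lv_Bv imageE)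
  have b: "Bv N i \<notin> Rv ` X" for X by (metis Rv_Bv imageE)
  have c: "Bv N i \<in> Bv N ` {j \<in> {1..N}. letter w j = 1} \<longleftrightarrow> letter w i = 1"
    using Bv_inj assms by auto
  show ?thesis using a b c Bv_GV[OF assms] by (auto simp: GeV_def)
qed
lemma GoV_inner: "p \<in> GV N \<Longrightarrow> p \<notin> Lv N ` {1..N} \<Longrightarrow> p \<notin> Rv ` {1..N} \<Longrightarrow> p \<notin> Bv N ` {1..N}
   \<Longrightarrow> p \<in> GoV N u w \<and> p \<in> GeV N v w"
  by (auto simp: GoV_def GeV_def)



lemma reach_lemma:
  assumes inj: "\<And>a a' y. (a,y)\<in>D \<Longrightarrow> (a',y)\<in>D \<Longrightarrow> a = a'"
    and src: "\<And>z. (z,x)\<notin>D"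
    and path: "(x,y) \<in> {(a,b). (a,b)\<in>D \<or> (b,a)\<in>D}\<^sup>*"
  shows "(x,y) \<in> D\<^sup>*"
  using path
proof (induction rule: rtrancl_induct)
  case base then show ?case by simp
next
  case (step y c)
  from step.hyps(2) have "(y,c)\<in>D \<or> (c,y)\<in>D" by simp
  then show ?case
  proof
    assume "(y,c)\<in>D" with step.IH show ?thesis by (rule rtrancl_into_rtrancl)
  next
    assume cy: "(c,y)\<in>D"
    show ?thesis
    proof (cases "y = x")
      case True with cy src show ?thesis by simp
    next
      case False
      from step.IH False obtain a where a: "(x,a)\<in>D\<^sup>*" "(a,y)\<in>D"
        by (metis rtranclE)
      with cy inj have "a = c" by blast
      with a show ?thesis by simp
    qed
  qed
qed

lemma reach_end:
  assumes inj: "\<And>a a' y. (a,y)\<in>D \<Longrightarrow> (a',y)\<in>D \<Longrightarrow> a = a'"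
    and src: "\<And>z. (z,x)\<notin>D"
    and path: "(x,y) \<in> {(a,b). (a,b)\<in>D \<or> (b,a)\<in>D}\<^sup>*"
    and ne: "x \<noteq> y"
  shows "\<exists>z. (z,y) \<in> D"
proof -
  have "(x,y) \<in> D\<^sup>*" by (rule reach_lemma[OF inj src path])
  with ne show ?thesis by (metis rtranclE)
qed

lemma und_rel: "{(a,b). {a,b} \<in> und D} = {(a,b). (a,b)\<in>D \<or> (b,a)\<in>D}"
  by (auto simp: und_def doubleton_eq_iff)

lemma joined_und: "joined (und D) p q \<longleftrightarrow> (p,q) \<in> {(a,b). (a,b)\<in>D \<or> (b,a)\<in>D}\<^sup>*"
  unfolding joined_def und_rel ..

lemma finite_in: "finite D \<Longrightarrow> finite {q. (q,p)\<in>D}"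
  by (rule finite_subset[of _ "fst ` D"]) force+
lemma finite_out: "finite D \<Longrightarrow> finite {q. (p,q)\<in>D}"
  by (rule finite_subset[of _ "snd ` D"]) force+

lemma indeg_pos: "finite D \<Longrightarrow> (q,p)\<in>D \<Longrightarrow> indeg D p \<noteq> 0"
  unfolding indeg_def using finite_in[of D p] by (metis (mono_tags) card_0_eq empty_iff mem_Collect_eq)
lemma outdeg_pos: "finite D \<Longrightarrow> (p,q)\<in>D \<Longrightarrow> outdeg D p \<noteq> 0"
  unfolding outdeg_def using finite_out[of D p] by (metis (mono_tags) card_0_eq empty_iff mem_Collect_eq)

lemma deg_und:
  assumes fin: "finite D" and anti: "\<And>a b. (a,b)\<in>D \<Longrightarrow> (b,a)\<notin>D"
  shows "deg (und D) p = indeg D p + outdeg D p"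
proof -
  have eq: "{e \<in> und D. p \<in> e} = (\<lambda>q. {q,p}) ` ({q. (q,p)\<in>D} \<union> {q. (p,q)\<in>D})"
  proof
    show "{e \<in> und D. p \<in> e} \<subseteq> (\<lambda>q. {q,p}) ` ({q. (q,p)\<in>D} \<union> {q. (p,q)\<in>D})"
    proof
      fix e assume "e \<in> {e \<in> und D. p \<in> e}"
      then obtain a b where e: "e = {a,b}" "(a,b)\<in>D" "p \<in> {a,b}" by (auto simp: und_def)
      show "e \<in> (\<lambda>q. {q,p}) ` ({q. (q,p)\<in>D} \<union> {q. (p,q)\<in>D})"
      proof (cases "p = b")
        case True thus ?thesis using e by auto
      next
        case False hence "p = a" using e by auto
        thus ?thesis using e by (auto simp: insert_commute)
      qed
    qed
  next
    show "(\<lambda>q. {q,p}) ` ({q. (q,p)\<in>D} \<union> {q. (p,q)\<in>D}) \<subseteq> {e \<in> und D. p \<in> e}"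
    proof
      fix e assume "e \<in> (\<lambda>q. {q,p}) ` ({q. (q,p)\<in>D} \<union> {q. (p,q)\<in>D})"
      then obtain q where q: "e = {q,p}" "(q,p)\<in>D \<or> (p,q)\<in>D" by blast
      from q(2) have "e \<in> und D"
      proof
        assume "(q,p)\<in>D" thus ?thesis unfolding und_def q(1) by blast
      next
        assume "(p,q)\<in>D" thus ?thesis unfolding und_def q(1) by (blast intro: insert_commute)
      qed
      thus "e \<in> {e \<in> und D. p \<in> e}" using q by blast
    qed
  qed
  have inj: "inj_on (\<lambda>q. {q,p}) X" for X by (auto simp: inj_on_def doubleton_eq_iff)
  have dis: "{q. (q,p)\<in>D} \<inter> {q. (p,q)\<in>D} = {}" using anti by blast
  have "deg (und D) p = card ({q. (q,p)\<in>D} \<union> {q. (p,q)\<in>D})"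
    unfolding deg_def eq by (rule card_image[OF inj])
  also have "\<dots> = indeg D p + outdeg D p"
    unfolding indeg_def outdeg_def
    by (rule card_Un_disjoint[OF finite_in[OF fin] finite_out[OF fin] dis])
  finally show ?thesis .
qed



lemma oT_arc: "is_oriented_TFPL N D \<Longrightarrow> (a,b) \<in> D \<Longrightarrow> {a,b} \<in> GE N \<and> (b,a) \<notin> D"
  unfolding is_oriented_TFPL_def by blast

lemma oT_finite: assumes O: "is_oriented_TFPL N D" shows "finite D"
proof -
  have "D \<subseteq> GV N \<times> GV N"
  proof
    fix x assume "x \<in> D"
    then obtain a b where "x = (a,b)" "(a,b) \<in> D" by (cases x) auto
    thus "x \<in> GV N \<times> GV N" using oT_arc[OF O] GE_pair by blast
  qed
  thus ?thesis using finite_GV[of N] by (simp add: finite_subset)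
qed

lemma oT_deg: "is_oriented_TFPL N D \<Longrightarrow> deg (und D) p = indeg D p + outdeg D p"
  by (rule deg_und[OF oT_finite]) (auto dest: oT_arc)

lemma oT_parity: "is_oriented_TFPL N D \<Longrightarrow> (a,b) \<in> D \<Longrightarrow> odd_vertex a \<longleftrightarrow> even_vertex b"
  using oT_arc GE_parity by blast

lemma fwd_o_deg:
  assumes O: "is_oriented_TFPL N D" and Bd: "has_boundary N u v w D"
    and wu: "is_word N u" and ww: "is_word N w" and p: "p \<in> GoV N u w"
  shows "(odd_vertex p \<longrightarrow> outdeg D p = 1) \<and> (even_vertex p \<longrightarrow> indeg D p = 1)"
proof -
  have TF: "is_TFPL N (und D)"
    and d2: "\<forall>p\<in>GV N. deg (und D) p = 2 \<longrightarrow> indeg D p = 1 \<and> outdeg D p = 1"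
    and LR: "\<forall>i\<in>{1..N}. indeg D (Lv N i) = 0 \<and> outdeg D (Rv i) = 0"
    using O by (auto simp: is_oriented_TFPL_def)
  have inner: "\<forall>p\<in>GV N. p \<notin> Lv N ` {1..N} \<union> Rv ` {1..N} \<union> Bv N ` {1..N} \<longrightarrow> deg (und D) p = 2"
    using TF by (simp add: is_TFPL_def)
  have pGV: "p \<in> GV N" using p by (simp add: GoV_def)
  have dg: "deg (und D) q = indeg D q + outdeg D q" for q by (rule oT_deg[OF O])
  show ?thesis
  proof (cases "p \<in> Lv N ` {1..N}")
    case True
    then obtain i where i: "i \<in> {1..N}" "p = Lv N i" by blast
    have "letter u i \<noteq> 0" using p i GoV_Lv[OF i(1)] by simp
    hence "letter u i = 1" using letter01[OF wu i(1)] by simp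
    hence "deg (und D) p = 1" using Bd i by (simp add: has_boundary_def)
    moreover have "indeg D p = 0" using LR i by simp
    ultimately have "outdeg D p = 1" using dg[of p] by simp
    thus ?thesis using i Lv_odd even_not_odd_vertex by metis
  next
    case nL: False
    show ?thesis
    proof (cases "p \<in> Rv ` {1..N}")
      case True
      then obtain i where i: "i \<in> {1..N}" "p = Rv i" by blast
      thus ?thesis using p GoV_Rv by blast
    next
      case nR: False
      show ?thesis
      proof (cases "p \<in> Bv N ` {1..N}")
        case True
        then obtain i where i: "i \<in> {1..N}" "p = Bv N i" by blast
        have "letter w i \<noteq> 0" using p i GoV_Bv[OF i(1)] by simp
        hence "letter w i = 1" using letter01[OF ww i(1)] by simp
        hence "indeg D p = 1" using Bd i by (simp add: has_boundary_def)
        thus ?thesis using i Bv_even even_not_odd_vertex by metis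
      next
        case False
        hence "deg (und D) p = 2" using inner pGV nL nR by blast
        thus ?thesis using d2 pGV by blast
      qed
    qed
  qed
qed

lemma fwd_e_deg:
  assumes O: "is_oriented_TFPL N D" and Bd: "has_boundary N u v w D"
    and wv: "is_word N v" and ww: "is_word N w" and p: "p \<in> GeV N v w"
  shows "(odd_vertex p \<longrightarrow> indeg D p = 1) \<and> (even_vertex p \<longrightarrow> outdeg D p = 1)"
proof -
  have TF: "is_TFPL N (und D)"
    and d2: "\<forall>p\<in>GV N. deg (und D) p = 2 \<longrightarrow> indeg D p = 1 \<and> outdeg D p = 1"
    and LR: "\<forall>i\<in>{1..N}. indeg D (Lv N i) = 0 \<and> outdeg D (Rv i) = 0"
    using O by (auto simp: is_oriented_TFPL_def)
  have inner: "\<forall>p\<in>GV N. p \<notin> Lv N ` {1..N} \<union> Rv ` {1..N} \<union> Bv N ` {1..N} \<longrightarrow> deg (und D) p = 2"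
    using TF by (simp add: is_TFPL_def)
  have pGV: "p \<in> GV N" using p by (simp add: GeV_def)
  have dg: "deg (und D) q = indeg D q + outdeg D q" for q by (rule oT_deg[OF O])
  show ?thesis
  proof (cases "p \<in> Lv N ` {1..N}")
    case True
    then obtain i where i: "i \<in> {1..N}" "p = Lv N i" by blast
    thus ?thesis using p GeV_Lv by blast
  next
    case nL: False
    show ?thesis
    proof (cases "p \<in> Rv ` {1..N}")
      case True
      then obtain i where i: "i \<in> {1..N}" "p = Rv i" by blast
      have "letter v i \<noteq> 1" using p i GeV_Rv[OF i(1)] by simp
      hence "letter v i = 0" using letter01[OF wv i(1)] by simp
      hence "deg (und D) p = 1" using Bd i by (simp add: has_boundary_def)
      moreover have "outdeg D p = 0" using LR i by simp
      ultimately have "indeg D p = 1" using dg[of p] by simp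
      thus ?thesis using i Rv_odd even_not_odd_vertex by metis
    next
      case nR: False
      show ?thesis
      proof (cases "p \<in> Bv N ` {1..N}")
        case True
        then obtain i where i: "i \<in> {1..N}" "p = Bv N i" by blast
        have "letter w i \<noteq> 1" using p i GeV_Bv[OF i(1)] by simp
        hence "letter w i = 0" using letter01[OF ww i(1)] by simp
        hence "outdeg D p = 1" using Bd i by (simp add: has_boundary_def)
        thus ?thesis using i Bv_even even_not_odd_vertex by metis
      next
        case False
        hence "deg (und D) p = 2" using inner pGV nL nR by blast
        thus ?thesis using d2 pGV by blast
      qed
    qed
  qed
qed

lemma card1_unique: "card X = 1 \<Longrightarrow> \<exists>q. X = {q}"
  by (rule card_1_singletonE) auto



definition recon :: "edge set \<Rightarrow> edge set \<Rightarrow> (vert \<times> vert) set" where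
  "recon A B = {(a,b). {a,b}\<in>A \<and> odd_vertex a \<and> even_vertex b}
              \<union> {(a,b). {a,b} \<in> B \<and> even_vertex a \<and> odd_vertex b}"

lemma Mo_mem: "{a,b} \<in> Mo D \<Longrightarrow> odd_vertex a \<Longrightarrow> even_vertex b \<Longrightarrow> (a,b) \<in> D"
proof -
  assume "{a,b} \<in> Mo D" "odd_vertex a" "even_vertex b"
  then obtain c d where "{a,b} = {c,d}" "(c,d)\<in>D" "odd_vertex c" "even_vertex d"
    unfolding Mo_def by blast
  thus ?thesis using \<open>odd_vertex a\<close> \<open>even_vertex b\<close> even_not_odd_vertex
    by (metis doubleton_eq_iff)
qed

lemma Me_mem: "{a,b} \<in> Me D \<Longrightarrow> even_vertex a \<Longrightarrow> odd_vertex b \<Longrightarrow> (a,b) \<in> D"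
proof -
  assume "{a,b} \<in> Me D" "even_vertex a" "odd_vertex b"
  then obtain c d where "{a,b} = {c,d}" "(c,d)\<in>D" "even_vertex c" "odd_vertex d"
    unfolding Me_def by blast
  thus ?thesis using \<open>odd_vertex b\<close> \<open>even_vertex a\<close> even_not_odd_vertex
    by (metis doubleton_eq_iff)
qed

lemma oT_recon: assumes O: "is_oriented_TFPL N D" shows "recon (Mo D) (Me D) = D"
proof (intro set_eqI iffI)
  fix x assume "x \<in> recon (Mo D) (Me D)"
  then obtain a b where x: "x = (a,b)" and
    "({a,b}\<in>Mo D \<and> odd_vertex a \<and> even_vertex b) \<or> ({a,b} \<in> Me D \<and> even_vertex a \<and> odd_vertex b)"
    unfolding recon_def by blast
  thus "x \<in> D" using Mo_mem Me_mem by blast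
next
  fix x assume xD: "x \<in> D"
  then obtain a b where x: "x = (a,b)" and ab: "(a,b) \<in> D" by (cases x) auto
  have par: "odd_vertex a \<longleftrightarrow> even_vertex b" by (rule oT_parity[OF O ab])
  show "x \<in> recon (Mo D) (Me D)"
  proof (cases "odd_vertex a")
    case True
    hence "{a,b} \<in> Mo D" using ab par unfolding Mo_def by blast
    thus ?thesis using True par x unfolding recon_def by blast
  next
    case False
    hence "{a,b} \<in> Me D" using ab par even_not_odd_vertex unfolding Me_def by blast
    thus ?thesis using False par x even_not_odd_vertex unfolding recon_def by blast
  qed
qed

lemma fwd_Mo:
  assumes O: "is_oriented_TFPL N D" and Bd: "has_boundary N u v w D"
    and wu: "is_word N u" and wv: "is_word N v" and ww: "is_word N w"
  shows "perfect_matching N (GoV N u w) (Mo D)"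
  unfolding perfect_matching_def
proof (intro conjI ballI)
  have fin: "finite D" by (rule oT_finite[OF O])
  have dg: "deg (und D) q = indeg D q + outdeg D q" for q by (rule oT_deg[OF O])
  have TF: "is_TFPL N (und D)"
    and LR: "\<forall>i\<in>{1..N}. indeg D (Lv N i) = 0 \<and> outdeg D (Rv i) = 0"
    using O by (auto simp: is_oriented_TFPL_def)
  have degs: "\<forall>i\<in>{1..N}. deg (und D) (Lv N i) \<le> 1 \<and> deg (und D) (Rv i) \<le> 1 \<and> deg (und D) (Bv N i) = 1"
    using TF by (simp add: is_TFPL_def)
  show "Mo D \<subseteq> induced_edges N (GoV N u w)"
  proof
    fix e assume "e \<in> Mo D"
    then obtain a b where e: "e = {a,b}" "(a,b)\<in>D" "odd_vertex a" "even_vertex b"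
      unfolding Mo_def by blast
    have GE: "{a,b} \<in> GE N" using oT_arc[OF O e(2)] by blast
    have aGV: "a \<in> GV N" and bGV: "b \<in> GV N" using GE_pair[OF GE] by auto
    have "a \<notin> Rv ` {1..N}" using LR outdeg_pos[OF fin e(2)] by auto
    moreover have "a \<notin> Bv N ` X" for X using e(3) Bv_even even_not_odd_vertex by auto
    moreover have "a \<notin> Lv N ` {i \<in> {1..N}. letter u i = 0}"
    proof
      assume "a \<in> Lv N ` {i \<in> {1..N}. letter u i = 0}"
      then obtain i where i: "i \<in> {1..N}" "letter u i = 0" "a = Lv N i" by blast
      have "letter u i = 1 \<longleftrightarrow> deg (und D) (Lv N i) = 1" using Bd i(1) unfolding has_boundary_def by blast
      hence "deg (und D) a \<noteq> 1" using i by simp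
      hence "deg (und D) a = 0" using degs i by force
      thus False using dg[of a] outdeg_pos[OF fin e(2)] by simp
    qed
    ultimately have aG: "a \<in> GoV N u w" using aGV by (simp add: GoV_def)
    have "b \<notin> Rv ` X" for X using e(4) Rv_odd even_not_odd_vertex by auto
    moreover have "b \<notin> Lv N ` X" for X using e(4) Lv_odd even_not_odd_vertex by auto
    moreover have "b \<notin> Bv N ` {i \<in> {1..N}. letter w i = 0}"
    proof
      assume "b \<in> Bv N ` {i \<in> {1..N}. letter w i = 0}"
      then obtain i where i: "i \<in> {1..N}" "letter w i = 0" "b = Bv N i" by blast
      have "outdeg D b = 1" using Bd i by (auto simp: has_boundary_def)
      moreover have "deg (und D) b = 1" using degs i by auto
      ultimately show False using dg[of b] indeg_pos[OF fin e(2)] by simp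
    qed
    ultimately have bG: "b \<in> GoV N u w" using bGV by (simp add: GoV_def)
    show "e \<in> induced_edges N (GoV N u w)" using e GE aG bG by (simp add: induced_edges_def)
  qed
next
  fix p assume p: "p \<in> GoV N u w"
  note pd = fwd_o_deg[OF O Bd wu ww p]
  show "\<exists>!e. e \<in> Mo D \<and> p \<in> e"
  proof (cases "odd_vertex p")
    case True
    hence "card {q. (p,q)\<in>D} = 1" using pd by (simp add: outdeg_def)
    then obtain q where q: "{q'. (p,q')\<in>D} = {q}" using card1_unique by blast
    hence pq: "(p,q)\<in>D" by blast
    have eq: "even_vertex q" using oT_parity[OF O pq] True by simp
    show ?thesis
    proof (rule ex1I[of _ "{p,q}"])
      show "{p,q} \<in> Mo D \<and> p \<in> {p,q}" using pq True eq unfolding Mo_def by blast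
    next
      fix e assume "e \<in> Mo D \<and> p \<in> e"
      then obtain a b where e: "e = {a,b}" "(a,b)\<in>D" "odd_vertex a" "even_vertex b" "p \<in> {a,b}"
        unfolding Mo_def by blast
      have "p = a" using e True even_not_odd_vertex by auto
      hence "b = q" using q e(2) by blast
      thus "e = {p,q}" using e \<open>p = a\<close> by simp
    qed
  next
    case False
    hence ev: "even_vertex p" using even_not_odd_vertex by simp
    hence "card {q. (q,p)\<in>D} = 1" using pd by (simp add: indeg_def)
    then obtain q where q: "{q'. (q',p)\<in>D} = {q}" using card1_unique by blast
    hence pq: "(q,p)\<in>D" by blast
    have oq: "odd_vertex q" using oT_parity[OF O pq] ev by simp
    show ?thesis
    proof (rule ex1I[of _ "{q,p}"])
      show "{q,p} \<in> Mo D \<and> p \<in> {q,p}" using pq ev oq unfolding Mo_def by blast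
    next
      fix e assume "e \<in> Mo D \<and> p \<in> e"
      then obtain a b where e: "e = {a,b}" "(a,b)\<in>D" "odd_vertex a" "even_vertex b" "p \<in> {a,b}"
        unfolding Mo_def by blast
      have "p = b" using e False by auto
      hence "a = q" using q e(2) by blast
      thus "e = {q,p}" using e \<open>p = b\<close> by simp
    qed
  qed
qed

lemma fwd_Me:
  assumes O: "is_oriented_TFPL N D" and Bd: "has_boundary N u v w D"
    and wu: "is_word N u" and wv: "is_word N v" and ww: "is_word N w"
  shows "perfect_matching N (GeV N v w) (Me D)"
  unfolding perfect_matching_def
proof (intro conjI ballI)
  have fin: "finite D" by (rule oT_finite[OF O])
  have dg: "deg (und D) q = indeg D q + outdeg D q" for q by (rule oT_deg[OF O])
  have TF: "is_TFPL N (und D)"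
    and LR: "\<forall>i\<in>{1..N}. indeg D (Lv N i) = 0 \<and> outdeg D (Rv i) = 0"
    using O by (auto simp: is_oriented_TFPL_def)
  have degs: "\<forall>i\<in>{1..N}. deg (und D) (Lv N i) \<le> 1 \<and> deg (und D) (Rv i) \<le> 1 \<and> deg (und D) (Bv N i) = 1"
    using TF by (simp add: is_TFPL_def)
  show "Me D \<subseteq> induced_edges N (GeV N v w)"
  proof
    fix e assume "e \<in> Me D"
    then obtain a b where e: "e = {a,b}" "(a,b)\<in>D" "even_vertex a" "odd_vertex b"
      unfolding Me_def by blast
    have GE: "{a,b} \<in> GE N" using oT_arc[OF O e(2)] by blast
    have aGV: "a \<in> GV N" and bGV: "b \<in> GV N" using GE_pair[OF GE] by auto
    have "a \<notin> Rv ` X" for X using e(3) Rv_odd even_not_odd_vertex by auto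
    moreover have "a \<notin> Lv N ` X" for X using e(3) Lv_odd even_not_odd_vertex by auto
    moreover have "a \<notin> Bv N ` {i \<in> {1..N}. letter w i = 1}"
    proof
      assume "a \<in> Bv N ` {i \<in> {1..N}. letter w i = 1}"
      then obtain i where i: "i \<in> {1..N}" "letter w i = 1" "a = Bv N i" by blast
      have "indeg D a = 1" using Bd i by (auto simp: has_boundary_def)
      moreover have "deg (und D) a = 1" using degs i by auto
      ultimately show False using dg[of a] outdeg_pos[OF fin e(2)] by simp
    qed
    ultimately have aG: "a \<in> GeV N v w" using aGV by (simp add: GeV_def)
    have "b \<notin> Lv N ` {1..N}" using LR indeg_pos[OF fin e(2)] by auto
    moreover have "b \<notin> Bv N ` X" for X using e(4) Bv_even even_not_odd_vertex by auto
    moreover have "b \<notin> Rv ` {i \<in> {1..N}. letter v i = 1}"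
    proof
      assume "b \<in> Rv ` {i \<in> {1..N}. letter v i = 1}"
      then obtain i where i: "i \<in> {1..N}" "letter v i = 1" "b = Rv i" by blast
      have "letter v i = 0 \<longleftrightarrow> deg (und D) (Rv i) = 1" using Bd i(1) unfolding has_boundary_def by blast
      hence "deg (und D) b \<noteq> 1" using i by simp
      hence "deg (und D) b = 0" using degs i by force
      thus False using dg[of b] indeg_pos[OF fin e(2)] by simp
    qed
    ultimately have bG: "b \<in> GeV N v w" using bGV by (simp add: GeV_def)
    show "e \<in> induced_edges N (GeV N v w)" using e GE aG bG by (simp add: induced_edges_def)
  qed
next
  fix p assume p: "p \<in> GeV N v w"
  note pd = fwd_e_deg[OF O Bd wv ww p]
  show "\<exists>!e. e \<in> Me D \<and> p \<in> e"
  proof (cases "odd_vertex p")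
    case True
    hence "card {q. (q,p)\<in>D} = 1" using pd by (simp add: indeg_def)
    then obtain q where q: "{q'. (q',p)\<in>D} = {q}" using card1_unique by blast
    hence pq: "(q,p)\<in>D" by blast
    have eq: "even_vertex q" using oT_parity[OF O pq] True even_not_odd_vertex by metis
    show ?thesis
    proof (rule ex1I[of _ "{q,p}"])
      show "{q,p} \<in> Me D \<and> p \<in> {q,p}" using pq True eq unfolding Me_def by blast
    next
      fix e assume "e \<in> Me D \<and> p \<in> e"
      then obtain a b where e: "e = {a,b}" "(a,b)\<in>D" "even_vertex a" "odd_vertex b" "p \<in> {a,b}"
        unfolding Me_def by blast
      have "p = b" using e True even_not_odd_vertex by auto
      hence "a = q" using q e(2) by blast
      thus "e = {q,p}" using e \<open>p = b\<close> by simp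
    qed
  next
    case False
    hence ev: "even_vertex p" using even_not_odd_vertex by simp
    hence "card {q. (p,q)\<in>D} = 1" using pd by (simp add: outdeg_def)
    then obtain q where q: "{q'. (p,q')\<in>D} = {q}" using card1_unique by blast
    hence pq: "(p,q)\<in>D" by blast
    have oq: "odd_vertex q" using oT_parity[OF O pq] False even_not_odd_vertex by metis
    show ?thesis
    proof (rule ex1I[of _ "{p,q}"])
      show "{p,q} \<in> Me D \<and> p \<in> {p,q}" using pq ev oq unfolding Me_def by blast
    next
      fix e assume "e \<in> Me D \<and> p \<in> e"
      then obtain a b where e: "e = {a,b}" "(a,b)\<in>D" "even_vertex a" "odd_vertex b" "p \<in> {a,b}"
        unfolding Me_def by blast
      have "p = a" using e False by auto
      hence "b = q" using q e(2) by blast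
      thus "e = {p,q}" using e \<open>p = a\<close> by simp
    qed
  qed
qed

lemma fwd_disj: assumes O: "is_oriented_TFPL N D" shows "Mo D \<inter> Me D = {}"
proof (rule ccontr)
  assume "Mo D \<inter> Me D \<noteq> {}"
  then obtain e where "e \<in> Mo D" "e \<in> Me D" by blast
  then obtain a b c d where e: "e = {a,b}" "(a,b)\<in>D" "odd_vertex a" "even_vertex b"
    "e = {c,d}" "(c,d)\<in>D" "even_vertex c" "odd_vertex d"
    unfolding Mo_def Me_def by blast
  have "a = d \<and> b = c" using e even_not_odd_vertex by (metis doubleton_eq_iff)
  thus False using e oT_arc[OF O e(2)] by blast
qed



lemma pm_GE: "perfect_matching N W M \<Longrightarrow> M \<subseteq> GE N"
  by (auto simp: perfect_matching_def induced_edges_def)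

lemma pm_nb_empty: "perfect_matching N W M \<Longrightarrow> p \<notin> W \<Longrightarrow> {q. {q,p}\<in>M} = {}"
  by (auto simp: perfect_matching_def induced_edges_def)

lemma pm_nb_single:
  assumes pm: "perfect_matching N W M" and p: "p \<in> W"
  shows "\<exists>q. {q. {q,p}\<in>M} = {q}"
proof -
  from pm p obtain e where e: "e \<in> M" "p \<in> e" and un: "\<And>e'. e' \<in> M \<and> p \<in> e' \<Longrightarrow> e' = e"
    unfolding perfect_matching_def by metis
  have "e \<in> GE N" using pm_GE[OF pm] e by blast
  then obtain a b where ab: "e = {a,b}" using GE_elim by blast
  define q where "q = (if p = a then b else a)"
  have eq: "e = {q,p}" using ab e q_def by auto
  have "{q'. {q',p}\<in>M} = {q}"
  proof (intro set_eqI iffI)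
    fix x assume "x \<in> {q'. {q',p}\<in>M}"
    hence "{x,p} = e" using un by blast
    hence "{x,p} = {q,p}" using eq by simp
    thus "x \<in> {q}" by (auto simp: doubleton_eq_iff)
  next
    fix x assume "x \<in> {q}" thus "x \<in> {q'. {q',p}\<in>M}" using eq e by simp
  qed
  thus ?thesis by blast
qed

lemma pm_card: "perfect_matching N W M \<Longrightarrow> card {q. {q,p}\<in>M} = (if p \<in> W then 1 else 0)"
proof -
  assume pm: "perfect_matching N W M"
  show ?thesis
  proof (cases "p \<in> W")
    case True
    then obtain q where "{q. {q,p}\<in>M} = {q}" using pm_nb_single[OF pm] by blast
    thus ?thesis using True by simp
  next
    case False
    have "{q. {q,p}\<in>M} = {}" by (rule pm_nb_empty[OF pm False])
    thus ?thesis using False by (simp only: card.empty if_False)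
  qed
qed

lemma pm_uniq: "perfect_matching N W M \<Longrightarrow> {q,p}\<in>M \<Longrightarrow> {q',p}\<in>M \<Longrightarrow> q = q'"
proof -
  assume pm: "perfect_matching N W M" and h: "{q,p}\<in>M" "{q',p}\<in>M"
  have "p \<in> W" using pm h by (auto simp: perfect_matching_def induced_edges_def)
  then obtain r where r: "{x. {x,p}\<in>M} = {r}" using pm_nb_single[OF pm] by blast
  have "q \<in> {x. {x,p}\<in>M}" "q' \<in> {x. {x,p}\<in>M}" using h by simp_all
  thus ?thesis unfolding r by simp
qed

lemma recon_in:
  assumes "A \<subseteq> GE N" "B \<subseteq> GE N"
  shows "{q. (q,p) \<in> recon A B} = (if even_vertex p then {q. {q,p}\<in>A} else {q. {q,p}\<in>B})"
  using assms GE_parity[of _ p N] even_not_odd_vertex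
  unfolding recon_def by auto

lemma recon_out:
  assumes "A \<subseteq> GE N" "B \<subseteq> GE N"
  shows "{q. (p,q) \<in> recon A B} = (if odd_vertex p then {q. {q,p}\<in>A} else {q. {q,p}\<in>B})"
  using assms GE_parity[of p _ N] even_not_odd_vertex
  unfolding recon_def by (auto simp: insert_commute)

lemma recon_arc:
  assumes "A \<subseteq> GE N" "B \<subseteq> GE N" "(a,b) \<in> recon A B"
  shows "{a,b} \<in> GE N"
  using assms unfolding recon_def by auto

lemma recon_anti:
  assumes "A \<inter> B = {}" "(a,b) \<in> recon A B"
  shows "(b,a) \<notin> recon A B"
  using assms even_not_odd_vertex unfolding recon_def by (auto simp: insert_commute)

lemma recon_finite:
  assumes "A \<subseteq> GE N" "B \<subseteq> GE N"
  shows "finite (recon A B)"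
proof -
  have "recon A B \<subseteq> GV N \<times> GV N"
  proof
    fix x assume "x \<in> recon A B"
    then obtain a b where "x = (a,b)" "(a,b) \<in> recon A B" by (cases x) auto
    thus "x \<in> GV N \<times> GV N" using recon_arc[OF assms] GE_pair by blast
  qed
  thus ?thesis using finite_GV[of N] by (simp add: finite_subset)
qed

lemma recon_Mo:
  assumes "A \<subseteq> GE N" "B \<subseteq> GE N"
  shows "Mo (recon A B) = A"
proof (intro set_eqI iffI)
  fix e assume "e \<in> Mo (recon A B)"
  then obtain a b where "e = {a,b}" "(a,b) \<in> recon A B" "odd_vertex a"
    unfolding Mo_def by blast
  thus "e \<in> A" using even_not_odd_vertex unfolding recon_def by blast
next
  fix e assume eA: "e \<in> A"
  then obtain a b where ab: "e = {a,b}" using assms GE_elim by blast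
  have par: "odd_vertex a \<longleftrightarrow> even_vertex b" using GE_parity eA ab assms by blast
  show "e \<in> Mo (recon A B)"
  proof (cases "odd_vertex a")
    case True
    thus ?thesis using par eA ab unfolding Mo_def recon_def by blast
  next
    case False
    have "{b,a} \<in> A" using eA ab by (simp add: insert_commute)
    moreover have "odd_vertex b" "even_vertex a" using False par even_not_odd_vertex by auto
    ultimately show ?thesis using ab unfolding Mo_def recon_def by (blast intro: insert_commute)
  qed
qed

lemma recon_Me:
  assumes "A \<subseteq> GE N" "B \<subseteq> GE N"
  shows "Me (recon A B) = B"
proof (intro set_eqI iffI)
  fix e assume "e \<in> Me (recon A B)"
  then obtain a b where "e = {a,b}" "(a,b) \<in> recon A B" "even_vertex a"
    unfolding Me_def by blast
  thus "e \<in> B" using even_not_odd_vertex unfolding recon_def by blast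
next
  fix e assume eA: "e \<in> B"
  then obtain a b where ab: "e = {a,b}" using assms GE_elim by blast
  have par: "odd_vertex a \<longleftrightarrow> even_vertex b" using GE_parity eA ab assms by blast
  show "e \<in> Me (recon A B)"
  proof (cases "odd_vertex a")
    case False
    hence "even_vertex a" "odd_vertex b" using par even_not_odd_vertex by auto
    thus ?thesis using eA ab unfolding Me_def recon_def by blast
  next
    case True
    have "{b,a} \<in> B" using eA ab by (simp add: insert_commute)
    moreover have "even_vertex b" using True par by auto
    ultimately show ?thesis using ab True unfolding Me_def recon_def by (blast intro: insert_commute)
  qed
qed



lemma bwd:
  assumes pmA: "perfect_matching N (GoV N u w) A" and pmB: "perfect_matching N (GeV N v w) B"
    and disj: "A \<inter> B = {}"
    and wu: "is_word N u" and wv: "is_word N v" and ww: "is_word N w"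
  shows "is_oriented_TFPL N (recon A B) \<and> has_boundary N u v w (recon A B)"
proof -
  define D where "D = recon A B"
  have AGE: "A \<subseteq> GE N" by (rule pm_GE[OF pmA])
  have BGE: "B \<subseteq> GE N" by (rule pm_GE[OF pmB])
  have fin: "finite D" unfolding D_def by (rule recon_finite[OF AGE BGE])
  have anti: "\<And>a b. (a,b)\<in>D \<Longrightarrow> (b,a)\<notin>D" unfolding D_def by (rule recon_anti[OF disj])
  have arc: "\<And>a b. (a,b)\<in>D \<Longrightarrow> {a,b} \<in> GE N" unfolding D_def by (rule recon_arc[OF AGE BGE])
  have inD: "{q. (q,p)\<in>D} = (if even_vertex p then {q. {q,p}\<in>A} else {q. {q,p}\<in>B})" for p
    unfolding D_def by (rule recon_in[OF AGE BGE])
  have outD: "{q. (p,q)\<in>D} = (if odd_vertex p then {q. {q,p}\<in>A} else {q. {q,p}\<in>B})" for p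
    unfolding D_def by (rule recon_out[OF AGE BGE])
  have indeg_eq: "indeg D p = (if even_vertex p then (if p \<in> GoV N u w then 1 else 0)
                               else (if p \<in> GeV N v w then 1 else 0))" for p
    unfolding indeg_def inD using pm_card[OF pmA, of p] pm_card[OF pmB, of p] by simp
  have outdeg_eq: "outdeg D p = (if odd_vertex p then (if p \<in> GoV N u w then 1 else 0)
                               else (if p \<in> GeV N v w then 1 else 0))" for p
    unfolding outdeg_def outD using pm_card[OF pmA, of p] pm_card[OF pmB, of p] by simp
  have deg_eq: "deg (und D) p = (if p \<in> GoV N u w then 1 else 0) + (if p \<in> GeV N v w then 1 else 0)" for p
    using deg_und[OF fin anti, of p] indeg_eq[of p] outdeg_eq[of p] even_not_odd_vertex[of p]
    by (auto split: if_splits)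
  have in_le: "indeg D p \<le> 1" for p using indeg_eq[of p] by simp
  have out_le: "outdeg D p \<le> 1" for p using outdeg_eq[of p] by simp
  have in_uniq: "\<And>a a' y. (a,y)\<in>D \<Longrightarrow> (a',y)\<in>D \<Longrightarrow> a = a'"
  proof -
    fix a a' y assume h: "(a,y)\<in>D" "(a',y)\<in>D"
    hence "a \<in> {q. (q,y)\<in>D}" "a' \<in> {q. (q,y)\<in>D}" by simp_all
    thus "a = a'" unfolding inD using pm_uniq[OF pmA] pm_uniq[OF pmB]
      by (auto split: if_splits)
  qed
  have out_uniq: "\<And>a a' y. (y,a)\<in>D \<Longrightarrow> (y,a')\<in>D \<Longrightarrow> a = a'"
  proof -
    fix a a' y assume h: "(y,a)\<in>D" "(y,a')\<in>D"
    hence "a \<in> {q. (y,q)\<in>D}" "a' \<in> {q. (y,q)\<in>D}" by simp_all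
    thus "a = a'" unfolding outD using pm_uniq[OF pmA] pm_uniq[OF pmB]
      by (auto split: if_splits)
  qed
  have noinL: "(z, Lv N i) \<notin> D" if "i \<in> {1..N}" for z i
  proof
    assume "(z, Lv N i) \<in> D"
    hence "z \<in> {q. (q, Lv N i)\<in>D}" by simp
    thus False unfolding inD using Lv_odd[of N i] even_not_odd_vertex
      pm_nb_empty[OF pmB GeV_Lv[OF that]] by auto
  qed
  have nooutR: "(Rv i, z) \<notin> D" if "i \<in> {1..N}" for z i
  proof
    assume "(Rv i, z) \<in> D"
    hence "z \<in> {q. (Rv i, q)\<in>D}" by simp
    thus False unfolding outD using Rv_odd[of i]
      pm_nb_empty[OF pmA GoV_Rv[OF that]] by auto
  qed
  have l01: "letter x i = 0 \<or> letter x i = 1" if "is_word N x" "i \<in> {1..N}" for x i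
    using letter01[OF that] .
  have TF: "is_TFPL N (und D)"
    unfolding is_TFPL_def
  proof (intro conjI ballI impI)
    show "und D \<subseteq> GE N" unfolding und_def using arc by blast
  next
    fix i assume i: "i \<in> {1..N}"
    show "deg (und D) (Lv N i) \<le> 1" using deg_eq[of "Lv N i"] GeV_Lv[OF i] by simp
    show "deg (und D) (Rv i) \<le> 1" using deg_eq[of "Rv i"] GoV_Rv[OF i] by simp
    show "deg (und D) (Bv N i) = 1" using deg_eq[of "Bv N i"] GoV_Bv[OF i] GeV_Bv[OF i] l01[OF ww i]
      by auto
  next
    fix p assume "p \<in> GV N" "p \<notin> Lv N ` {1..N} \<union> Rv ` {1..N} \<union> Bv N ` {1..N}"
    hence "p \<in> GoV N u w" "p \<in> GeV N v w" using GoV_inner by blast+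
    thus "deg (und D) p = 2" using deg_eq[of p] by simp
  next
    fix i j assume i: "i \<in> {1..N}" and j: "j \<in> {1..N}" and ij: "i \<noteq> j"
    show "\<not> joined (und D) (Lv N i) (Lv N j)"
    proof
      assume "joined (und D) (Lv N i) (Lv N j)"
      hence path: "(Lv N i, Lv N j) \<in> {(a,b). (a,b)\<in>D \<or> (b,a)\<in>D}\<^sup>*" by (simp add: joined_und)
      have ne: "Lv N i \<noteq> Lv N j" using Lv_inj[OF i j] ij by simp
      have "\<exists>z. (z, Lv N j) \<in> D"
      proof (rule reach_end[OF _ _ path ne])
        show "\<And>a a' y. (a,y)\<in>D \<Longrightarrow> (a',y)\<in>D \<Longrightarrow> a = a'" by (rule in_uniq)
        show "\<And>z. (z, Lv N i) \<notin> D" by (rule noinL[OF i])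
      qed
      then obtain z where "(z, Lv N j) \<in> D" by blast
      thus False using noinL[OF j] by blast
    qed
    show "\<not> joined (und D) (Rv i) (Rv j)"
    proof
      assume "joined (und D) (Rv i) (Rv j)"
      hence path0: "(Rv i, Rv j) \<in> {(a,b). (a,b)\<in>D \<or> (b,a)\<in>D}\<^sup>*" by (simp add: joined_und)
      have S: "{(a,b). (a,b)\<in>D \<or> (b,a)\<in>D} = {(a,b). (a,b)\<in>D\<inverse> \<or> (b,a)\<in>D\<inverse>}" by auto
      have path: "(Rv i, Rv j) \<in> {(a,b). (a,b)\<in>D\<inverse> \<or> (b,a)\<in>D\<inverse>}\<^sup>*" using path0 S by simp
      have inj': "\<And>a a' y. (a,y)\<in>D\<inverse> \<Longrightarrow> (a',y)\<in>D\<inverse> \<Longrightarrow> a = a'" using out_uniq by blast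
      have src': "\<And>z. (z, Rv i)\<notin>D\<inverse>" using nooutR[OF i] by blast
      have ne: "Rv i \<noteq> Rv j" using ij by (simp add: Rv_inj)
      have "\<exists>z. (z, Rv j) \<in> D\<inverse>"
      proof (rule reach_end[OF _ _ path ne])
        show "\<And>a a' y. (a,y)\<in>D\<inverse> \<Longrightarrow> (a',y)\<in>D\<inverse> \<Longrightarrow> a = a'" by (rule inj')
        show "\<And>z. (z, Rv i) \<notin> D\<inverse>" by (rule src')
      qed
      then obtain z where "(z, Rv j) \<in> D\<inverse>" by blast
      thus False using nooutR[OF j] by blast
    qed
  qed
  have O: "is_oriented_TFPL N D"
    unfolding is_oriented_TFPL_def
  proof (intro conjI allI impI ballI)
    fix a b assume "(a,b)\<in>D" thus "{a,b} \<in> GE N" "(b,a)\<notin>D" using arc anti by auto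
  next
    show "is_TFPL N (und D)" by (rule TF)
  next
    fix p assume "p \<in> GV N" "deg (und D) p = 2"
    hence "indeg D p + outdeg D p = 2" using deg_und[OF fin anti] by simp
    thus "indeg D p = 1" "outdeg D p = 1" using in_le[of p] out_le[of p] by auto
  next
    fix i assume i: "i \<in> {1..N}"
    show "indeg D (Lv N i) = 0" using indeg_eq[of "Lv N i"] Lv_odd[of N i] even_not_odd_vertex GeV_Lv[OF i]
      by simp
    show "outdeg D (Rv i) = 0" using outdeg_eq[of "Rv i"] Rv_odd[of i] GoV_Rv[OF i] by simp
  qed
  have Bd: "has_boundary N u v w D"
    unfolding has_boundary_def
  proof (intro ballI conjI impI)
    fix i assume i: "i \<in> {1..N}"
    show "letter u i = 1 \<longleftrightarrow> deg (und D) (Lv N i) = 1"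
      using deg_eq[of "Lv N i"] GoV_Lv[OF i] GeV_Lv[OF i] l01[OF wu i] by auto
    show "letter v i = 0 \<longleftrightarrow> deg (und D) (Rv i) = 1"
      using deg_eq[of "Rv i"] GoV_Rv[OF i] GeV_Rv[OF i] l01[OF wv i] by auto
    show "indeg D (Bv N i) = 1" if "letter w i = 1"
      using indeg_eq[of "Bv N i"] Bv_even[of N i] GoV_Bv[OF i] that by simp
    show "outdeg D (Bv N i) = 1" if "letter w i = 0"
      using outdeg_eq[of "Bv N i"] Bv_even[of N i] even_not_odd_vertex GeV_Bv[OF i] that by simp
  qed
  show ?thesis using O Bd unfolding D_def by blast
qed



theorem theorem3p3:
  fixes N :: nat and u v w :: "nat list"
  assumes "N \<ge> 1" and "is_word N u" and "is_word N v" and "is_word N w"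
  shows "bij_betw (\<lambda>D. (Mo D, Me D))
           {D. is_oriented_TFPL N D \<and> has_boundary N u v w D}
           {(A, B). perfect_matching N (GoV N u w) A \<and> perfect_matching N (GeV N v w) B
                    \<and> A \<inter> B = {}}"
  unfolding bij_betw_def
proof (intro conjI)
  show "inj_on (\<lambda>D. (Mo D, Me D)) {D. is_oriented_TFPL N D \<and> has_boundary N u v w D}"
  proof (rule inj_onI)
    fix D1 D2
    assume "D1 \<in> {D. is_oriented_TFPL N D \<and> has_boundary N u v w D}"
      "D2 \<in> {D. is_oriented_TFPL N D \<and> has_boundary N u v w D}"
      "(Mo D1, Me D1) = (Mo D2, Me D2)"
    thus "D1 = D2" using oT_recon by (metis (no_types, lifting) mem_Collect_eq prod.inject)
  qed
next
  show "(\<lambda>D. (Mo D, Me D)) ` {D. is_oriented_TFPL N D \<and> has_boundary N u v w D} =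
    {(A, B). perfect_matching N (GoV N u w) A \<and> perfect_matching N (GeV N v w) B \<and> A \<inter> B = {}}"
  proof (intro set_eqI iffI)
    fix x assume "x \<in> (\<lambda>D. (Mo D, Me D)) ` {D. is_oriented_TFPL N D \<and> has_boundary N u v w D}"
    then obtain D where D: "is_oriented_TFPL N D" "has_boundary N u v w D" "x = (Mo D, Me D)" by blast
    show "x \<in> {(A, B). perfect_matching N (GoV N u w) A \<and> perfect_matching N (GeV N v w) B \<and> A \<inter> B = {}}"
      using fwd_Mo[OF D(1,2) assms(2-4)] fwd_Me[OF D(1,2) assms(2-4)] fwd_disj[OF D(1)] D(3) by simp
  next
    fix x assume "x \<in> {(A, B). perfect_matching N (GoV N u w) A \<and> perfect_matching N (GeV N v w) B \<and> A \<inter> B = {}}"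
    then obtain A B where AB: "x = (A,B)" "perfect_matching N (GoV N u w) A" "perfect_matching N (GeV N v w) B" "A \<inter> B = {}"
      by blast
    have r: "is_oriented_TFPL N (recon A B) \<and> has_boundary N u v w (recon A B)"
      by (rule bwd[OF AB(2,3,4) assms(2-4)])
    have "x = (Mo (recon A B), Me (recon A B))"
      using AB recon_Mo[OF pm_GE[OF AB(2)] pm_GE[OF AB(3)]] recon_Me[OF pm_GE[OF AB(2)] pm_GE[OF AB(3)]] by simp
    thus "x \<in> (\<lambda>D. (Mo D, Me D)) ` {D. is_oriented_TFPL N D \<and> has_boundary N u v w D}"
      using r by blast
  qed
qed

end
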